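(* Let $q$ be an odd prime power, $d\ge 2$, $\gamma\in\mathbb{F}_q^*$ a non-square, and let $W\subset \{v\in\mathbb{F}_q^d:\|v\|\in\{1,\gamma\}\}$ contain exactly one element of each pair $\{v,-v\}$. Let $E\subset\mathbb{F}_q^d$ and let $F\subset W\times\mathbb{F}_q$, identified with the set of non-degenerate hyperplanes $\{H_{v,t}:(v,t)\in F\}$ (each non-degenerate hyperplane has exactly one such representation), and write $F(v,t)$ for the indicator function of $F$. Then $$|\Delta(E,F)| \ge \frac{|E|^2|F|^2}{2q^{-1}|E|^2|F|^2 + 2q^{d-1}|E||F|\cdot \max_{v\in W}\sum_{t\in\mathbb{F}_q}F(v,t)}.$$ In particular, if $|E||F|>q^{d+1}$, then $|\Delta(E,F)| > q/4$, so $|\Delta(E,F)|\gg q$.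
   Context: $\mathbb{F}_q$ is the field with $q$ elements; $x\cdot y=\sum_i x_iy_i$, $\|x\|=x_1^2+\dots+x_d^2$. $H_{v,t}=\{y\in\mathbb{F}_q^d: y\cdot v=t\}$; such a hyperplane is non-degenerate if $\|v\|\ne 0$. $O_d(\mathbb{F}_q)$ is the group of linear maps $\theta$ of $\mathbb{F}_q^d$ with $\|\theta y\|=\|y\|$ for all $y$. Pairs $(x,h)$ and $(x',h')$ (point, hyperplane) are equivalent if there is $\theta\in O_d(\mathbb{F}_q)$ with $\{\theta(y-x)+x': y\in h\}=h'$. $\Delta(E,F)$ is the set of equivalence classes of pairs $(x,H_{v,t})$ with $x\in E$, $(v,t)\in F$. *)

theory Defs
  imports "HOL-Analysis.Analysis"
begin

text \<open>Vectors in F_q^d are modelled as 'a ^ 'n with 'a a finite field and d = CARD('n).\<close>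

definition fdot :: "'a::comm_ring_1 ^ 'n \<Rightarrow> 'a ^ 'n \<Rightarrow> 'a" where
  "fdot x y = (\<Sum>i\<in>UNIV. x $ i * y $ i)"

definition fnorm :: "'a::comm_ring_1 ^ 'n \<Rightarrow> 'a" where
  "fnorm x = (\<Sum>i\<in>UNIV. x $ i * x $ i)"

definition hyp :: "'a::comm_ring_1 ^ 'n \<Rightarrow> 'a \<Rightarrow> ('a ^ 'n) set" where
  "hyp v t = {y. fdot y v = t}"

definition orth_group :: "('a::comm_ring_1 ^ 'n ^ 'n) set" where
  "orth_group = {M. \<forall>y. fnorm (M *v y) = fnorm y}"

definition pair_equiv :: "(('a::comm_ring_1 ^ 'n) \<times> ('a ^ 'n) set) rel" where
  "pair_equiv = {((x, h), (x', h')).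
      \<exists>M \<in> (orth_group :: ('a ^ 'n ^ 'n) set). (\<lambda>y. M *v (y - x) + x') ` h = h'}"

definition Delta :: "('a::comm_ring_1 ^ 'n) set \<Rightarrow> (('a ^ 'n) \<times> 'a) set
                     \<Rightarrow> (('a ^ 'n) \<times> ('a ^ 'n) set) set set" where
  "Delta E F = {(x, hyp v t) | x v t. x \<in> E \<and> (v, t) \<in> F} // pair_equiv"

end

theory Submission
  imports Defs "HOL-Number_Theory.Residues"
begin

lemma fdot_commute: "fdot x y = fdot y x"
  unfolding fdot_def by (simp add: mult.commute)

lemma fdot_add_left: "fdot (x + y) v = fdot x v + fdot y v"
  unfolding fdot_def by (simp add: distrib_right sum.distrib)

lemma fdot_diff_left: "fdot (x - y) v = fdot x v - fdot y v"
  unfolding fdot_def by (simp add: left_diff_distrib sum_subtractf)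

lemma fdot_scale_left: "fdot (c *s x) v = c * fdot x v"
  unfolding fdot_def by (simp add: sum_distrib_left mult.assoc)

lemma fdot_scale_right: "fdot x (c *s v) = c * fdot x v"
  unfolding fdot_def by (simp add: sum_distrib_left algebra_simps)

lemma fdot_axis: "fdot (axis i 1) w = w $ i"
proof -
  have "\<And>ia. axis i 1 $ ia * w $ ia = (if ia = i then w $ ia else 0)"
    by (simp add: axis_def)
  thus ?thesis unfolding fdot_def by simp
qed

lemma fnorm_fdot: "fnorm x = fdot x x"
  unfolding fnorm_def fdot_def by simp

lemma fdot_transpose: "fdot (M *v z) w = fdot z (transpose M *v w)"
proof -
  have "fdot (M *v z) w = (\<Sum>i\<in>UNIV. \<Sum>j\<in>UNIV. M$i$j * z$j * w$i)"
    unfolding fdot_def matrix_vector_mult_def by (simp add: sum_distrib_right)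
  also have "\<dots> = (\<Sum>j\<in>UNIV. \<Sum>i\<in>UNIV. M$i$j * z$j * w$i)"
    by (rule sum.swap)
  also have "\<dots> = fdot z (transpose M *v w)"
    unfolding fdot_def matrix_vector_mult_def transpose_def by (simp add: sum_distrib_left mult_ac)
  finally show ?thesis .
qed

lemma fnorm_scale: "fnorm (c *s v) = c * c * fnorm v"
  by (simp add: fnorm_fdot fdot_scale_left fdot_scale_right)

lemma vec_eq_fdot: "(\<And>i. fdot (axis i 1) a = fdot (axis i 1) b) \<Longrightarrow> a = b"
  by (simp add: fdot_axis vec_eq_iff)

lemma two_ne_zero_field:
  assumes "odd CARD('a::{finite,field})"
  shows "(2::'a) \<noteq> 0"
proof
  assume h: "(2::'a) = 0"
  have "CHAR('a) dvd 2" using of_nat_eq_0_iff_char_dvd[of 2, where 'a='a] h by simp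
  moreover have "CHAR('a) dvd CARD('a)" by (rule CHAR_dvd_CARD)
  ultimately have "odd CHAR('a)" using assms by (metis dvd_trans)
  with \<open>CHAR('a) dvd 2\<close> have "CHAR('a) = 1"
    by (metis dvd_antisym dvd_refl even_numeral nat_dvd_1_iff_1 not_prime_1 prime_nat_iff two_is_prime_nat)
  thus False by simp
qed

lemma fnorm_add: "fnorm (a + b) = fnorm a + 2 * fdot a b + fnorm b"
proof -
  have r: "fdot x (a + b) = fdot x a + fdot x b" for x
    unfolding fdot_def by (simp add: distrib_left sum.distrib)
  have c: "fdot b a = fdot a b" by (rule fdot_commute)
  show ?thesis unfolding fnorm_fdot fdot_add_left r c by (simp only: mult_2 add.assoc)
qed

lemma orth_dot:
  assumes two: "(2::'a::field) \<noteq> 0" and M: "M \<in> (orth_group :: ('a^'n^'n) set)"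
  shows "fdot (M *v y) (M *v z) = fdot y z"
proof -
  have N: "\<And>w. fnorm (M *v w) = fnorm w" using M by (simp add: orth_group_def)
  have "fnorm (M *v (y + z)) = fnorm (y + z)" by (rule N)
  hence "fnorm (M *v y) + 2 * fdot (M *v y) (M *v z) + fnorm (M *v z) = fnorm y + 2 * fdot y z + fnorm z"
    by (simp add: matrix_vector_right_distrib fnorm_add)
  hence "2 * fdot (M *v y) (M *v z) = 2 * fdot y z" by (simp add: N)
  thus ?thesis using two by simp
qed

lemma orth_left_inv:
  assumes two: "(2::'a::field) \<noteq> 0" and M: "M \<in> (orth_group :: ('a^'n^'n) set)"
  shows "transpose M *v (M *v y) = y"
proof (rule vec_eq_fdot)
  fix i
  have "fdot (axis i 1) (transpose M *v (M *v y)) = fdot (M *v axis i 1) (M *v y)"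
    by (simp add: fdot_transpose)
  also have "\<dots> = fdot (axis i 1) y" by (rule orth_dot[OF two M])
  finally show "fdot (axis i 1) (transpose M *v (M *v y)) = fdot (axis i 1) y" .
qed

lemma orth_T_norm:
  assumes two: "(2::'a::{finite,field}) \<noteq> 0" and M: "M \<in> (orth_group :: ('a^'n::finite^'n) set)"
  shows "fnorm (transpose M *v w) = fnorm w"
proof -
  have "inj ((*v) M)"
    by (rule inj_on_inverseI[where g="(*v) (transpose M)"]) (rule orth_left_inv[OF two M])
  hence "surj ((*v) M)" by (simp add: finite_UNIV_inj_surj)
  then obtain y where y: "w = M *v y" by blast
  have "transpose M *v w = y" using y orth_left_inv[OF two M] by metis
  hence "fnorm (transpose M *v w) = fnorm y" by simp
  also have "\<dots> = fnorm w" using M y by (simp add: orth_group_def)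
  finally show ?thesis .
qed

lemma fdot_scaled_axis: "fdot (c *s axis i 1) u = c * u $ i"
  by (simp add: fdot_scale_left fdot_axis)

lemma proportional:
  fixes v u :: "'a::field ^ 'n::finite"
  assumes v0: "v \<noteq> 0" and H: "\<And>z. fdot z v = s \<Longrightarrow> fdot z u = s'"
  shows "\<exists>\<mu>. u = \<mu> *s v \<and> s' = \<mu> * s"
proof -
  obtain i where vi: "v $ i \<noteq> 0" using v0 by (metis vec_eq_iff zero_index)
  define z0 where "z0 = (s / v$i) *s axis i 1"
  have z0v: "fdot z0 v = s" using vi by (simp add: z0_def fdot_scaled_axis)
  have z0u: "fdot z0 u = s'" by (rule H[OF z0v])
  define \<mu> where "\<mu> = u$i / v$i"
  have "u = \<mu> *s v"
  proof (subst vec_eq_iff, intro allI)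
    fix j
    define w where "w = (v$j) *s axis i 1 - (v$i) *s axis j 1"
    have wv: "fdot w v = 0" by (simp add: w_def fdot_diff_left fdot_scaled_axis mult.commute)
    have "fdot (z0 + w) v = s" by (simp add: fdot_add_left z0v wv)
    hence "fdot (z0 + w) u = s'" by (rule H)
    hence "fdot w u = 0" using z0u by (simp add: fdot_add_left)
    hence "v$j * u$i = v$i * u$j" by (simp add: w_def fdot_diff_left fdot_scaled_axis)
    thus "u $ j = (\<mu> *s v) $ j" using vi by (simp add: \<mu>_def field_simps)
  qed
  moreover have "s' = \<mu> * s" using z0u vi by (simp add: z0_def fdot_scaled_axis \<mu>_def field_simps)
  ultimately show ?thesis by blast
qed

lemma invariant:
  fixes x x' v v' :: "'a::{finite,field} ^ 'n::finite"
  assumes two: "(2::'a) \<noteq> 0" and M: "M \<in> (orth_group :: ('a^'n^'n) set)"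
    and img: "(\<lambda>y. M *v (y - x) + x') ` hyp v t = hyp v' t'"
    and nv: "fnorm v = 1 \<or> fnorm v = \<gamma>" and nv': "fnorm v' = 1 \<or> fnorm v' = \<gamma>"
    and g0: "\<gamma> \<noteq> 0" and gns: "\<not> (\<exists>x. x * x = \<gamma>)"
  shows "(t - fdot x v)^2 = (t' - fdot x' v')^2"
proof -
  have v0: "v \<noteq> 0" using nv g0 by (auto simp: fnorm_def)
  define u where "u = transpose M *v v'"
  have H: "fdot z u = t' - fdot x' v'" if "fdot z v = t - fdot x v" for z
  proof -
    have "z + x \<in> hyp v t" using that by (simp add: hyp_def fdot_add_left)
    hence "M *v (z + x - x) + x' \<in> hyp v' t'" using img by blast
    hence "fdot (M *v z) v' + fdot x' v' = t'" by (simp add: hyp_def fdot_add_left)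
    thus ?thesis by (simp add: u_def fdot_transpose algebra_simps)
  qed
  obtain \<mu> where mu: "u = \<mu> *s v" "t' - fdot x' v' = \<mu> * (t - fdot x v)"
    using proportional[OF v0 H] by blast
  have "fnorm v' = \<mu> * \<mu> * fnorm v"
    using orth_T_norm[OF two M, of v'] mu(1) by (simp add: u_def fnorm_scale)
  have mm: "\<mu> * \<mu> = 1"
  proof -
    consider "fnorm v = fnorm v'" | "fnorm v = 1" "fnorm v' = \<gamma>" | "fnorm v = \<gamma>" "fnorm v' = 1"
      using nv nv' by metis
    thus ?thesis
    proof cases
      case 1
      thus ?thesis using \<open>fnorm v' = \<mu> * \<mu> * fnorm v\<close> nv g0 by auto
    next
      case 2
      thus ?thesis using \<open>fnorm v' = \<mu> * \<mu> * fnorm v\<close> gns by auto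
    next
      case 3
      hence e: "\<mu> * \<mu> * \<gamma> = 1" using \<open>fnorm v' = \<mu> * \<mu> * fnorm v\<close> by simp
      hence "\<mu> \<noteq> 0" by auto
      hence "(1/\<mu>) * (1/\<mu>) = \<gamma>" using e by (simp add: field_simps)
      thus ?thesis using gns by blast
    qed
  qed
  have "(t' - fdot x' v')^2 = (\<mu>*\<mu>) * (t - fdot x v)^2"
    by (simp only: mu(2) power2_eq_square mult_ac)
  thus ?thesis using mm by simp
qed


definition ind :: "bool \<Rightarrow> real" where "ind P = (if P then 1 else 0)"

lemma ind_nonneg: "0 \<le> ind P" by (simp add: ind_def)

lemma sum_ind_delta: "finite S \<Longrightarrow> (\<Sum>u\<in>S. ind (a = u) * ind (b = u)) = (if a \<in> S then ind (a = b) else 0)"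
proof -
  assume "finite S"
  have "\<And>u. ind (a = u) * ind (b = u) = (if u = a then ind (a = b) else 0)"
    by (auto simp: ind_def)
  thus ?thesis using \<open>finite S\<close> by (simp add: sum.delta')
qed

lemma sum_ind_eq: "finite S \<Longrightarrow> (\<Sum>u\<in>S. ind (a = u)) = (if a \<in> S then 1 else 0)"
proof -
  assume "finite S"
  have "\<And>u. ind (a = u) = (if u = a then 1 else 0)" by (auto simp: ind_def)
  thus ?thesis using \<open>finite S\<close> by (simp add: sum.delta')
qed

lemma fdot_add_right: "fdot x (a + b) = fdot x a + fdot x b"
  unfolding fdot_def by (simp add: distrib_left sum.distrib)

lemma fdot_diff_right: "fdot x (a - b) = fdot x a - fdot x b"
  unfolding fdot_def by (simp add: right_diff_distrib sum_subtractf)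

lemma fdot_axis_right: "fdot w (axis i 1) = w $ i"
  using fdot_axis[of i w] by (simp add: fdot_commute)

lemma hyp_card:
  fixes a :: "'a::{finite,field} ^ 'n::finite"
  assumes a0: "a \<noteq> 0"
  shows "card {w. fdot a w = b} = CARD('a) ^ (CARD('n) - 1)"
proof -
  obtain i where ai: "a $ i \<noteq> 0" using a0 by (metis vec_eq_iff zero_index)
  define H where "H b = {w. fdot a w = b}" for b
  have cardH: "card (H b) = card (H 0)" for b
  proof -
    define e where "e = (b / a$i) *s axis i 1"
    have ae: "fdot a e = b" using ai by (simp add: e_def fdot_scale_right fdot_axis_right)
    have "H b = (\<lambda>w. w + e) ` H 0"
    proof
      show "H b \<subseteq> (\<lambda>w. w + e) ` H 0"
      proof
        fix w assume "w \<in> H b"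
        hence "w - e \<in> H 0" using ae by (simp add: H_def fdot_diff_right)
        thus "w \<in> (\<lambda>w. w + e) ` H 0" by (rule rev_image_eqI) simp
      qed
      show "(\<lambda>w. w + e) ` H 0 \<subseteq> H b"
        using ae by (auto simp: H_def fdot_add_right)
    qed
    moreover have "inj (\<lambda>w::'a^'n. w + e)" by (rule injI) simp
    ultimately show ?thesis by (simp add: card_image inj_on_subset)
  qed
  have "CARD('a^'n) = (\<Sum>b\<in>UNIV. card (H b))"
  proof -
    have "(\<Sum>b\<in>(UNIV::'a set). \<Sum>w | w \<in> (UNIV::('a^'n) set) \<and> fdot a w = b. (1::nat)) = (\<Sum>w\<in>(UNIV::('a^'n) set). 1)"
      by (rule sum.group) auto
    thus ?thesis by (simp add: H_def)
  qed
  also have "\<dots> = (\<Sum>b\<in>(UNIV::'a set). card (H 0))"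
    by (rule sum.cong[OF refl], rule cardH)
  also have "\<dots> = CARD('a) * card (H 0)" by simp
  finally have e: "CARD('a) ^ CARD('n) = CARD('a) * card (H 0)" by simp
  have "CARD('n) \<ge> 1" by (simp add: Suc_le_eq)
  hence "CARD('a) ^ CARD('n) = CARD('a) * CARD('a) ^ (CARD('n) - 1)"
    by (metis Suc_diff_le diff_Suc_1 power_Suc)
  hence "card (H 0) = CARD('a) ^ (CARD('n) - 1)" using e by simp
  thus ?thesis using cardH by (simp add: H_def)
qed

definition ncnt :: "('a::comm_ring_1 ^ 'n::finite) set \<Rightarrow> 'a ^ 'n \<Rightarrow> 'a \<Rightarrow> real" where
  "ncnt E w u = (\<Sum>x\<in>E. ind (fdot x w = u))"

definition Vv :: "('a::{finite,comm_ring_1} ^ 'n::finite) set \<Rightarrow> 'a ^ 'n \<Rightarrow> real" where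
  "Vv E w = (\<Sum>u\<in>UNIV. (ncnt E w u - real (card E) / real CARD('a))^2)"

lemma ncnt_sum:
  fixes E :: "('a::{finite,comm_ring_1} ^ 'n::finite) set"
  shows "(\<Sum>u\<in>UNIV. ncnt E w u) = real (card E)"
proof -
  have "(\<Sum>u\<in>UNIV. ncnt E w u) = (\<Sum>x\<in>E. \<Sum>u\<in>UNIV. ind (fdot x w = u))"
    unfolding ncnt_def by (rule sum.swap)
  also have "\<dots> = (\<Sum>x\<in>E. 1)" by (simp add: sum_ind_eq)
  finally show ?thesis by simp
qed

lemma ncnt_sq_sum:
  fixes E :: "('a::{finite,comm_ring_1} ^ 'n::finite) set"
  shows "(\<Sum>u\<in>UNIV. (ncnt E w u)^2) = (\<Sum>x\<in>E. \<Sum>x'\<in>E. ind (fdot x w = fdot x' w))"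
proof -
  have "(\<Sum>u\<in>UNIV. (ncnt E w u)^2) = (\<Sum>u\<in>UNIV. \<Sum>x\<in>E. \<Sum>x'\<in>E. ind (fdot x w = u) * ind (fdot x' w = u))"
    unfolding ncnt_def power2_eq_square by (simp add: sum_product)
  also have "\<dots> = (\<Sum>x\<in>E. \<Sum>u\<in>UNIV. \<Sum>x'\<in>E. ind (fdot x w = u) * ind (fdot x' w = u))"
    by (rule sum.swap)
  also have "\<dots> = (\<Sum>x\<in>E. \<Sum>x'\<in>E. \<Sum>u\<in>UNIV. ind (fdot x w = u) * ind (fdot x' w = u))"
    by (rule sum.cong[OF refl], rule sum.swap)
  also have "\<dots> = (\<Sum>x\<in>E. \<Sum>x'\<in>E. ind (fdot x w = fdot x' w))"
    by (simp add: sum_ind_delta)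
  finally show ?thesis .
qed

lemma Vv_eq:
  fixes E :: "('a::{finite,field} ^ 'n::finite) set"
  shows "Vv E w = (\<Sum>u\<in>UNIV. (ncnt E w u)^2) - real (card E)^2 / real CARD('a)"
proof -
  define c where "c = real (card E) / real CARD('a)"
  have q0: "real CARD('a) > 0" by simp
  have "Vv E w = (\<Sum>u\<in>UNIV. (ncnt E w u)^2 - 2 * c * ncnt E w u + c^2)"
    unfolding Vv_def c_def[symmetric] by (rule sum.cong[OF refl]) (simp add: power2_eq_square algebra_simps)
  also have "\<dots> = (\<Sum>u\<in>UNIV. (ncnt E w u)^2) - 2 * c * (\<Sum>u\<in>UNIV. ncnt E w u) + real CARD('a) * c^2"
    by (simp add: sum.distrib sum_subtractf sum_distrib_left)
  also have "\<dots> = (\<Sum>u\<in>UNIV. (ncnt E w u)^2) - real (card E)^2 / real CARD('a)"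
    unfolding ncnt_sum c_def using q0 by (simp add: power2_eq_square field_simps)
  finally show ?thesis .
qed

lemma sum_if_eq:
  fixes A B :: real
  assumes "finite E" "x \<in> E"
  shows "(\<Sum>x'\<in>E. if x = x' then A else B) = A + (real (card E) - 1) * B"
proof -
  have "(\<Sum>x'\<in>E. if x = x' then A else B) = (\<Sum>x'\<in>E. B + (if x' = x then A - B else 0))"
    by (rule sum.cong) auto
  also have "\<dots> = real (card E) * B + (A - B)"
    using assms by (simp add: sum.distrib sum.delta')
  finally show ?thesis by (simp add: algebra_simps)
qed

lemma sum_Vv:
  fixes E :: "('a::{finite,field} ^ 'n::finite) set"
  shows "(\<Sum>w\<in>UNIV. Vv E w) = (real CARD('a) - 1) * real CARD('a) ^ (CARD('n) - 1) * real (card E)"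
proof -
  define q where "q = real CARD('a)"
  define r where "r = real CARD('a) ^ (CARD('n) - 1)"
  have q0: "q > 0" by (simp add: q_def)
  have "CARD('n) \<ge> 1" by (simp add: Suc_le_eq)
  hence qd: "real CARD('a) ^ CARD('n) = q * r" unfolding q_def r_def
    by (metis Suc_diff_le diff_Suc_1 power_Suc)
  have cnt: "(\<Sum>w\<in>UNIV. ind (fdot x w = fdot x' w)) = (if x = x' then q * r else r)" for x x' :: "'a^'n"
  proof -
    have "(\<Sum>w\<in>UNIV. ind (fdot x w = fdot x' w)) = (\<Sum>w\<in>UNIV. ind (fdot (x - x') w = 0))"
      by (simp add: fdot_diff_left)
    also have "\<dots> = real (card {w. fdot (x - x') w = 0})"
      by (simp add: ind_def sum.If_cases)
    also have "\<dots> = (if x = x' then q * r else r)"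
    proof (cases "x = x'")
      case True
      thus ?thesis using qd by (simp add: fdot_def q_def)
    next
      case False
      thus ?thesis by (simp add: hyp_card r_def)
    qed
    finally show ?thesis .
  qed
  have "(\<Sum>w\<in>UNIV. \<Sum>u\<in>UNIV. (ncnt E w u)^2) = (\<Sum>w\<in>UNIV. \<Sum>x\<in>E. \<Sum>x'\<in>E. ind (fdot x w = fdot x' w))"
    by (simp add: ncnt_sq_sum)
  also have "\<dots> = (\<Sum>x\<in>E. \<Sum>w\<in>UNIV. \<Sum>x'\<in>E. ind (fdot x w = fdot x' w))"
    by (rule sum.swap)
  also have "\<dots> = (\<Sum>x\<in>E. \<Sum>x'\<in>E. \<Sum>w\<in>UNIV. ind (fdot x w = fdot x' w))"
    by (rule sum.cong[OF refl], rule sum.swap)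
  also have "\<dots> = (\<Sum>x\<in>E. \<Sum>x'\<in>E. if x = x' then q * r else r)"
    by (simp add: cnt)
  also have "\<dots> = (\<Sum>x\<in>E. q * r + (real (card E) - 1) * r)"
    by (rule sum.cong[OF refl], rule sum_if_eq) auto
  also have "\<dots> = real (card E) * (q * r + (real (card E) - 1) * r)" by simp
  finally have S: "(\<Sum>w\<in>UNIV. \<Sum>u\<in>UNIV. (ncnt E w u)^2) = real (card E) * (q * r + (real (card E) - 1) * r)" .
  have "(\<Sum>w\<in>UNIV. Vv E w) = (\<Sum>w\<in>UNIV. \<Sum>u\<in>UNIV. (ncnt E w u)^2) - real CARD('a^'n) * (real (card E)^2 / q)"
    by (simp add: Vv_eq sum_subtractf q_def)
  also have "\<dots> = real (card E) * (q * r + (real (card E) - 1) * r) - q * r * (real (card E)^2 / q)"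
    unfolding S using qd by simp
  also have "\<dots> = (q - 1) * r * real (card E)"
    using q0 by (simp add: field_simps power2_eq_square)
  finally show ?thesis by (simp add: q_def r_def)
qed

lemma Vv_scale:
  fixes E :: "('a::{finite,field} ^ 'n::finite) set"
  assumes c0: "c \<noteq> 0"
  shows "Vv E (c *s v) = Vv E v"
proof -
  have nc: "ncnt E (c *s v) u = ncnt E v (u / c)" for u
    unfolding ncnt_def fdot_scale_right using c0
    by (intro sum.cong refl) (auto simp: ind_def field_simps)
  define f where "f u = (ncnt E v u - real (card E) / real CARD('a))^2" for u
  have "Vv E (c *s v) = (\<Sum>u\<in>UNIV. f (u / c))" unfolding Vv_def f_def nc ..
  also have "\<dots> = (\<Sum>u\<in>UNIV. f u)"
    by (rule sum.reindex_bij_witness[where i="\<lambda>u. u * c" and j="\<lambda>u. u / c"]) (use c0 in auto)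
  finally show ?thesis unfolding Vv_def f_def .
qed

lemma Vv_nonneg: "0 \<le> Vv E w"
  unfolding Vv_def by (simp add: sum_nonneg)

lemma sq_one:
  fixes \<gamma> :: "'a::field"
  assumes e: "n' = m * m * n" and nv: "n = 1 \<or> n = \<gamma>" and nv': "n' = 1 \<or> n' = \<gamma>"
    and g0: "\<gamma> \<noteq> 0" and gns: "\<not> (\<exists>x. x * x = \<gamma>)"
  shows "m * m = 1"
proof -
  consider "n = n'" | "n = 1" "n' = \<gamma>" | "n = \<gamma>" "n' = 1"
    using nv nv' by metis
  thus ?thesis
  proof cases
    case 1
    thus ?thesis using e nv g0 by auto
  next
    case 2
    thus ?thesis using e gns by auto
  next
    case 3
    hence e: "m * m * \<gamma> = 1" using e by simp
    hence "m \<noteq> 0" by auto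
    hence "(1/m) * (1/m) = \<gamma>" using e by (simp add: field_simps)
    thus ?thesis using gns by blast
  qed
qed

lemma sumW_Vv:
  fixes E :: "('a::{finite,field} ^ 'n::finite) set" and W :: "('a ^ 'n) set"
  assumes W_sub: "W \<subseteq> {v. fnorm v = 1 \<or> fnorm v = \<gamma>}"
    and W_pairs: "\<And>v. fnorm v = 1 \<or> fnorm v = \<gamma> \<Longrightarrow> (v \<in> W \<longleftrightarrow> - v \<notin> W)"
    and g0: "\<gamma> \<noteq> 0" and gns: "\<not> (\<exists>x. x * x = \<gamma>)"
  shows "(\<Sum>v\<in>W. Vv E v) \<le> real CARD('a) ^ (CARD('n) - 1) * real (card E)"
proof -
  define U where "U = (UNIV::'a set) - {0}"
  define g where "g p = snd p *s fst p" for p :: "('a^'n) \<times> 'a"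
  have nz: "v \<noteq> 0" if "v \<in> W" for v
    using W_sub that g0 by (auto simp: fnorm_def)
  have inj: "inj_on g (W \<times> U)"
  proof (rule inj_onI)
    fix p p' assume p: "p \<in> W \<times> U" and p': "p' \<in> W \<times> U" and eq: "g p = g p'"
    obtain v c where pv: "p = (v, c)" by (cases p)
    obtain v' c' where pv': "p' = (v', c')" by (cases p')
    have v: "v \<in> W" "c \<noteq> 0" and v': "v' \<in> W" "c' \<noteq> 0" using p p' pv pv' by (auto simp: U_def)
    have e1: "c *s v = c' *s v'" using eq pv pv' by (simp add: g_def)
    define r where "r = c / c'"
    have vr: "v' = r *s v"
    proof -
      have "v' = (1/c') *s (c' *s v')" using v' by (simp add: vector_smult_assoc)
      also have "\<dots> = (1/c') *s (c *s v)" using e1 by simp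
      also have "\<dots> = r *s v" by (simp add: vector_smult_assoc r_def)
      finally show ?thesis .
    qed
    have rr: "r * r = 1"
      by (rule sq_one[OF _ _ _ g0 gns, where n="fnorm v" and n'="fnorm v'"])
         (use vr fnorm_scale W_sub v v' in auto)
    hence "(r - 1) * (r + 1) = 0" by (simp add: algebra_simps)
    hence "r - 1 = 0 \<or> r + 1 = 0" by simp
    hence "r = 1 \<or> r = -1" by (auto simp: eq_neg_iff_add_eq_0)
    moreover have "r \<noteq> -1"
    proof
      assume "r = -1"
      hence "v' = - v" using vr by (simp add: vector_sneg_minus1[symmetric])
      moreover have "- v \<notin> W" using W_pairs[of v] W_sub v by auto
      ultimately show False using v' by simp
    qed
    ultimately have "r = 1" by simp
    hence "v' = v" using vr by simp
    moreover have "c = c'" using \<open>r = 1\<close> v' by (simp add: r_def)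
    ultimately show "p = p'" using pv pv' by simp
  qed
  have cardU: "card U = CARD('a) - 1" by (simp add: U_def card_Diff_singleton)
  have q1: "CARD('a) \<ge> 1" by (simp add: Suc_le_eq)
  have "(real CARD('a) - 1) * (\<Sum>v\<in>W. Vv E v) = (\<Sum>v\<in>W. \<Sum>c\<in>U. Vv E (c *s v))"
    using cardU q1 by (simp add: sum_distrib_right Vv_scale U_def of_nat_diff mult.commute)
  also have "\<dots> = (\<Sum>p\<in>W \<times> U. Vv E (g p))"
    by (simp add: sum.cartesian_product g_def case_prod_beta)
  also have "\<dots> = (\<Sum>w\<in>g ` (W \<times> U). Vv E w)"
    by (rule sum.reindex[OF inj, symmetric, unfolded comp_def])
  also have "\<dots> \<le> (\<Sum>w\<in>UNIV. Vv E w)"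
    by (rule sum_mono2) (auto simp: Vv_nonneg)
  also have "\<dots> = (real CARD('a) - 1) * (real CARD('a) ^ (CARD('n) - 1) * real (card E))"
    by (simp add: sum_Vv)
  finally have "(real CARD('a) - 1) * (\<Sum>v\<in>W. Vv E v) \<le> (real CARD('a) - 1) * (real CARD('a) ^ (CARD('n) - 1) * real (card E))" .
  moreover have "real CARD('a) - 1 > 0"
  proof -
    have "(0::'a) \<noteq> 1" by simp
    hence "CARD('a) \<ge> 2"
      by (metis UNIV_I card_2_iff' card_le_Suc0_iff_eq finite not_less_eq_eq numeral_2_eq_2)
    thus ?thesis by simp
  qed
  ultimately show ?thesis by simp
qed


definition sB :: "('a::comm_ring_1 ^ 'n) \<times> (('a ^ 'n) \<times> 'a) \<Rightarrow> 'a" where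
  "sB b = snd (snd b) - fdot (fst b) (fst (snd b))"

definition nu :: "('a::comm_ring_1 ^ 'n) set \<Rightarrow> (('a ^ 'n) \<times> 'a) set \<Rightarrow> 'a \<Rightarrow> real" where
  "nu E F s = (\<Sum>b\<in>E \<times> F. ind (sB b = s))"

lemma sum_reindex_minus:
  fixes f :: "'a::{finite,ring} \<Rightarrow> real"
  shows "(\<Sum>s\<in>UNIV. f (t - s)) = (\<Sum>u\<in>UNIV. f u)"
  by (rule sum.reindex_bij_witness[where i="\<lambda>s. t - s" and j="\<lambda>s. t - s"]) auto

lemma nu_alt:
  fixes E :: "('a::{finite,comm_ring_1} ^ 'n::finite) set"
  shows "nu E F s = (\<Sum>p\<in>F. ncnt E (fst p) (snd p - s))"
proof -
  have "nu E F s = (\<Sum>x\<in>E. \<Sum>p\<in>F. ind (sB (x, p) = s))"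
    unfolding nu_def by (simp add: sum.cartesian_product)
  also have "\<dots> = (\<Sum>p\<in>F. \<Sum>x\<in>E. ind (sB (x, p) = s))" by (rule sum.swap)
  also have "\<dots> = (\<Sum>p\<in>F. ncnt E (fst p) (snd p - s))"
    unfolding ncnt_def sB_def
    by (intro sum.cong refl) (auto simp: ind_def algebra_simps)
  finally show ?thesis .
qed

lemma nu_sq_bound:
  fixes E :: "('a::{finite,field} ^ 'n::finite) set" and W :: "('a ^ 'n) set"
    and F :: "(('a ^ 'n) \<times> 'a) set"
  assumes W_sub: "W \<subseteq> {v. fnorm v = 1 \<or> fnorm v = \<gamma>}"
    and W_pairs: "\<And>v. fnorm v = 1 \<or> fnorm v = \<gamma> \<Longrightarrow> (v \<in> W \<longleftrightarrow> - v \<notin> W)"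
    and g0: "\<gamma> \<noteq> 0" and gns: "\<not> (\<exists>x. x * x = \<gamma>)"
    and F_sub: "F \<subseteq> W \<times> UNIV"
    and m: "\<And>v. v \<in> W \<Longrightarrow> real (card {t. (v, t) \<in> F}) \<le> m" and m0: "0 \<le> m"
  shows "(\<Sum>s\<in>UNIV. (nu E F s)^2) \<le> real (card E)^2 * real (card F)^2 / real CARD('a)
           + real CARD('a) ^ (CARD('n) - 1) * real (card E) * real (card F) * m"
proof -
  define q where "q = real CARD('a)"
  have q0: "q > 0" by (simp add: q_def)
  define c where "c = real (card E) / q"
  define \<delta> where "\<delta> p s = ncnt E (fst p) (snd p - s) - c" for p :: "('a^'n) \<times> 'a" and s
  define D where "D s = (\<Sum>p\<in>F. \<delta> p s)" for s
  have nuD: "nu E F s = real (card F) * c + D s" for s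
    unfolding nu_alt D_def \<delta>_def by (simp add: sum_subtractf)
  have d0: "(\<Sum>s\<in>UNIV. \<delta> p s) = 0" for p
  proof -
    have "(\<Sum>s\<in>UNIV. ncnt E (fst p) (snd p - s)) = real (card E)"
      using sum_reindex_minus[of "ncnt E (fst p)" "snd p"] by (simp add: ncnt_sum)
    thus ?thesis using q0 by (simp add: \<delta>_def sum_subtractf c_def q_def)
  qed
  have d2: "(\<Sum>s\<in>UNIV. (\<delta> p s)^2) = Vv E (fst p)" for p
    unfolding \<delta>_def Vv_def c_def q_def
    by (rule sum_reindex_minus[of "\<lambda>u. (ncnt E (fst p) u - real (card E) / real CARD('a))^2"])
  have D0: "(\<Sum>s\<in>UNIV. D s) = 0"
    unfolding D_def by (subst sum.swap) (simp add: d0)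
  have "(\<Sum>s\<in>UNIV. (nu E F s)^2) = (\<Sum>s\<in>UNIV. (real (card F) * c)^2 + 2 * (real (card F) * c) * D s + (D s)^2)"
    unfolding nuD by (simp add: power2_sum add_ac mult_ac)
  also have "\<dots> = q * (real (card F) * c)^2 + 2 * (real (card F) * c) * (\<Sum>s\<in>UNIV. D s) + (\<Sum>s\<in>UNIV. (D s)^2)"
    by (simp add: sum.distrib sum_distrib_left q_def)
  also have "\<dots> = real (card E)^2 * real (card F)^2 / q + (\<Sum>s\<in>UNIV. (D s)^2)"
    unfolding D0 c_def using q0 by (simp add: power2_eq_square field_simps)
  finally have S1: "(\<Sum>s\<in>UNIV. (nu E F s)^2) = real (card E)^2 * real (card F)^2 / q + (\<Sum>s\<in>UNIV. (D s)^2)" .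
  have "(\<Sum>s\<in>UNIV. (D s)^2) \<le> (\<Sum>s\<in>UNIV. (\<Sum>p\<in>F. (\<delta> p s)^2) * real (card F))"
    unfolding D_def by (rule sum_mono) (rule sum_squared_le_sum_of_squares)
  also have "\<dots> = real (card F) * (\<Sum>p\<in>F. \<Sum>s\<in>UNIV. (\<delta> p s)^2)"
    by (simp add: sum_distrib_left mult.commute sum.swap[of _ UNIV F])
  also have "\<dots> = real (card F) * (\<Sum>p\<in>F. Vv E (fst p))" by (simp add: d2)
  also have "\<dots> \<le> real (card F) * (m * (\<Sum>v\<in>W. Vv E v))"
  proof (rule mult_left_mono)
    have "(\<Sum>p\<in>F. Vv E (fst p)) = (\<Sum>v\<in>W. \<Sum>p | p \<in> F \<and> fst p = v. Vv E (fst p))"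
      by (rule sum.group[symmetric]) (use F_sub in auto)
    also have "\<dots> = (\<Sum>v\<in>W. real (card {t. (v, t) \<in> F}) * Vv E v)"
    proof (rule sum.cong[OF refl])
      fix v assume "v \<in> W"
      have e: "{p. p \<in> F \<and> fst p = v} = Pair v ` {t. (v, t) \<in> F}" by force
      have "(\<Sum>p | p \<in> F \<and> fst p = v. Vv E (fst p)) = (\<Sum>p | p \<in> F \<and> fst p = v. Vv E v)"
        by (rule sum.cong) auto
      also have "\<dots> = real (card {p. p \<in> F \<and> fst p = v}) * Vv E v" by simp
      also have "card {p. p \<in> F \<and> fst p = v} = card {t. (v, t) \<in> F}"
        unfolding e by (rule card_image) (simp add: inj_on_def)
      finally show "(\<Sum>p | p \<in> F \<and> fst p = v. Vv E (fst p)) = real (card {t. (v, t) \<in> F}) * Vv E v" .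
    qed
    also have "\<dots> \<le> (\<Sum>v\<in>W. m * Vv E v)"
      by (rule sum_mono) (use m Vv_nonneg in \<open>auto intro: mult_right_mono\<close>)
    finally show "(\<Sum>p\<in>F. Vv E (fst p)) \<le> m * (\<Sum>v\<in>W. Vv E v)" by (simp add: sum_distrib_left)
  qed simp
  also have "\<dots> \<le> real (card F) * (m * (real CARD('a) ^ (CARD('n) - 1) * real (card E)))"
  proof -
    have "m * (\<Sum>v\<in>W. Vv E v) \<le> m * (real CARD('a) ^ (CARD('n) - 1) * real (card E))"
    proof (rule mult_left_mono[OF _ m0])
      show "(\<Sum>v\<in>W. Vv E v) \<le> real CARD('a) ^ (CARD('n) - 1) * real (card E)"
        by (rule sumW_Vv[where \<gamma>=\<gamma>]) (use W_sub W_pairs g0 gns in auto)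
    qed
    thus ?thesis by (rule mult_left_mono) auto
  qed
  finally show ?thesis unfolding S1 q_def by (simp add: mult_ac)
qed


lemma ind_sq_le:
  fixes a b :: "'a::field"
  shows "ind (a^2 = b^2) \<le> ind (a = b) + ind (a = - b)"
proof (cases "a^2 = b^2")
  case True
  hence "(a - b) * (a + b) = 0" by (simp add: power2_eq_square algebra_simps)
  hence "a = b \<or> a = - b" by (auto simp: eq_neg_iff_add_eq_0)
  thus ?thesis by (auto simp: ind_def)
next
  case False
  thus ?thesis by (simp add: ind_def)
qed

lemma Qbound:
  fixes E :: "('a::{finite,field} ^ 'n::finite) set" and F :: "(('a ^ 'n) \<times> 'a) set"
  shows "(\<Sum>b\<in>E \<times> F. \<Sum>b'\<in>E \<times> F. ind ((sB b)^2 = (sB b')^2)) \<le> 2 * (\<Sum>s\<in>UNIV. (nu E F s)^2)"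
proof -
  define B where "B = E \<times> F"
  have fB: "finite B" by (simp add: B_def)
  have S1: "(\<Sum>s\<in>UNIV. (nu E F s)^2) = (\<Sum>b\<in>B. \<Sum>b'\<in>B. ind (sB b = sB b'))"
  proof -
    have "(\<Sum>s\<in>UNIV. (nu E F s)^2) = (\<Sum>s\<in>UNIV. \<Sum>b\<in>B. \<Sum>b'\<in>B. ind (sB b = s) * ind (sB b' = s))"
      unfolding nu_def B_def[symmetric] power2_eq_square by (simp add: sum_product)
    also have "\<dots> = (\<Sum>b\<in>B. \<Sum>s\<in>UNIV. \<Sum>b'\<in>B. ind (sB b = s) * ind (sB b' = s))"
      by (rule sum.swap)
    also have "\<dots> = (\<Sum>b\<in>B. \<Sum>b'\<in>B. \<Sum>s\<in>UNIV. ind (sB b = s) * ind (sB b' = s))"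
      by (rule sum.cong[OF refl], rule sum.swap)
    also have "\<dots> = (\<Sum>b\<in>B. \<Sum>b'\<in>B. ind (sB b = sB b'))"
      by (simp add: sum_ind_delta)
    finally show ?thesis .
  qed
  have S2: "(\<Sum>s\<in>UNIV. nu E F s * nu E F (- s)) = (\<Sum>b\<in>B. \<Sum>b'\<in>B. ind (sB b = - sB b'))"
  proof -
    have "(\<Sum>s\<in>UNIV. nu E F s * nu E F (- s)) = (\<Sum>s\<in>UNIV. \<Sum>b\<in>B. \<Sum>b'\<in>B. ind (sB b = s) * ind (- sB b' = s))"
      unfolding nu_def B_def[symmetric] by (simp add: sum_product minus_equation_iff eq_commute[of "sB _"])
    also have "\<dots> = (\<Sum>b\<in>B. \<Sum>s\<in>UNIV. \<Sum>b'\<in>B. ind (sB b = s) * ind (- sB b' = s))"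
      by (rule sum.swap)
    also have "\<dots> = (\<Sum>b\<in>B. \<Sum>b'\<in>B. \<Sum>s\<in>UNIV. ind (sB b = s) * ind (- sB b' = s))"
      by (rule sum.cong[OF refl], rule sum.swap)
    also have "\<dots> = (\<Sum>b\<in>B. \<Sum>b'\<in>B. ind (sB b = - sB b'))"
      by (simp add: sum_ind_delta)
    finally show ?thesis .
  qed
  have S3: "(\<Sum>s\<in>UNIV. nu E F s * nu E F (- s)) \<le> (\<Sum>s\<in>UNIV. (nu E F s)^2)"
  proof -
    have "(\<Sum>s\<in>UNIV. nu E F s * nu E F (- s)) \<le> (\<Sum>s\<in>UNIV. ((nu E F s)^2 + (nu E F (- s))^2) / 2)"
    proof (rule sum_mono)
      fix s
      have "0 \<le> (nu E F s - nu E F (- s))^2" by simp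
      thus "nu E F s * nu E F (- s) \<le> ((nu E F s)^2 + (nu E F (- s))^2) / 2"
        by (simp add: power2_eq_square algebra_simps)
    qed
    also have "\<dots> = ((\<Sum>s\<in>UNIV. (nu E F s)^2) + (\<Sum>s\<in>UNIV. (nu E F (- s))^2)) / 2"
      by (simp add: sum.distrib flip: sum_divide_distrib)
    also have "(\<Sum>s\<in>UNIV. (nu E F (- s))^2) = (\<Sum>s\<in>UNIV. (nu E F s)^2)"
      using sum_reindex_minus[of "\<lambda>s. (nu E F s)^2" 0] by simp
    finally show ?thesis by simp
  qed
  have "(\<Sum>b\<in>B. \<Sum>b'\<in>B. ind ((sB b)^2 = (sB b')^2)) \<le> (\<Sum>b\<in>B. \<Sum>b'\<in>B. ind (sB b = sB b') + ind (sB b = - sB b'))"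
    by (intro sum_mono ind_sq_le)
  also have "\<dots> = (\<Sum>s\<in>UNIV. (nu E F s)^2) + (\<Sum>s\<in>UNIV. nu E F s * nu E F (- s))"
    unfolding S1 S2 by (simp add: sum.distrib)
  also have "\<dots> \<le> 2 * (\<Sum>s\<in>UNIV. (nu E F s)^2)" using S3 by simp
  finally show ?thesis unfolding B_def .
qed

lemma fiber_cs:
  assumes fB: "finite B"
  shows "real (card B)^2 \<le> real (card (\<kappa> ` B)) * (\<Sum>b\<in>B. \<Sum>b'\<in>B. ind (\<kappa> b = \<kappa> b'))"
proof -
  define N where "N c = (\<Sum>b\<in>B. ind (\<kappa> b = c))" for c
  have fK: "finite (\<kappa> ` B)" using fB by simp
  have "(\<Sum>c\<in>\<kappa> ` B. N c) = (\<Sum>b\<in>B. \<Sum>c\<in>\<kappa> ` B. ind (\<kappa> b = c))"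
    unfolding N_def by (rule sum.swap)
  also have "\<dots> = (\<Sum>b\<in>B. 1)" using fK by (simp add: sum_ind_eq)
  finally have cB: "(\<Sum>c\<in>\<kappa> ` B. N c) = real (card B)" by simp
  have "(\<Sum>c\<in>\<kappa> ` B. (N c)^2) = (\<Sum>c\<in>\<kappa> ` B. \<Sum>b\<in>B. \<Sum>b'\<in>B. ind (\<kappa> b = c) * ind (\<kappa> b' = c))"
    unfolding N_def power2_eq_square by (simp add: sum_product)
  also have "\<dots> = (\<Sum>b\<in>B. \<Sum>c\<in>\<kappa> ` B. \<Sum>b'\<in>B. ind (\<kappa> b = c) * ind (\<kappa> b' = c))"
    by (rule sum.swap)
  also have "\<dots> = (\<Sum>b\<in>B. \<Sum>b'\<in>B. \<Sum>c\<in>\<kappa> ` B. ind (\<kappa> b = c) * ind (\<kappa> b' = c))"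
    by (rule sum.cong[OF refl], rule sum.swap)
  also have "\<dots> = (\<Sum>b\<in>B. \<Sum>b'\<in>B. ind (\<kappa> b = \<kappa> b'))"
    using fK by (simp add: sum_ind_delta)
  finally have sq: "(\<Sum>c\<in>\<kappa> ` B. (N c)^2) = (\<Sum>b\<in>B. \<Sum>b'\<in>B. ind (\<kappa> b = \<kappa> b'))" .
  have "(\<Sum>c\<in>\<kappa> ` B. N c)^2 \<le> (\<Sum>c\<in>\<kappa> ` B. (N c)^2) * real (card (\<kappa> ` B))"
    by (rule sum_squared_le_sum_of_squares)
  thus ?thesis unfolding cB sq by (simp add: mult.commute)
qed


lemma pair_equiv_refl: "((x, h), (x, h)) \<in> (pair_equiv :: (('a::comm_ring_1 ^ 'n::finite) \<times> ('a ^ 'n) set) rel)"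
proof -
  have "(mat 1 :: 'a^'n^'n) \<in> orth_group" by (simp add: orth_group_def)
  moreover have "(\<lambda>y. (mat 1 :: 'a^'n^'n) *v (y - x) + x) ` h = h" by simp
  ultimately show ?thesis unfolding pair_equiv_def by blast
qed

theorem mainTheorem2:
  fixes E :: "('a::{finite,field} ^ 'n::finite) set"
    and F :: "(('a ^ 'n) \<times> 'a) set"
    and W :: "('a ^ 'n) set"
    and \<gamma> :: 'a
  assumes q_odd: "odd CARD('a)"
    and d_ge: "CARD('n) \<ge> 2"
    and gamma_ns: "\<gamma> \<noteq> 0" "\<not> (\<exists>x. x * x = \<gamma>)"
    and W_sub: "W \<subseteq> {v. fnorm v = 1 \<or> fnorm v = \<gamma>}"
    and W_pairs: "\<And>v. fnorm v = 1 \<or> fnorm v = \<gamma> \<Longrightarrow> (v \<in> W \<longleftrightarrow> - v \<notin> W)"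
    and F_sub: "F \<subseteq> W \<times> UNIV"
  shows "real (card (Delta E F)) \<ge>
           (real (card E))^2 * (real (card F))^2 /
           (2 / real CARD('a) * (real (card E))^2 * (real (card F))^2
            + 2 * real CARD('a) ^ (CARD('n) - 1) * real (card E) * real (card F)
              * real (Max ((\<lambda>v. card {t. (v, t) \<in> F}) ` W)))
       \<and> (real (card E) * real (card F) > real CARD('a) ^ (CARD('n) + 1)
           \<longrightarrow> real (card (Delta E F)) > real CARD('a) / 4)"
proof -
  define q where "q = real CARD('a)"
  have q0: "q > 0" by (simp add: q_def)
  define X where "X = real (card E) * real (card F)"
  define mm where "mm = Max ((\<lambda>v. card {t. (v, t) \<in> F}) ` W)"
  define Den where "Den = 2 / q * (real (card E))^2 * (real (card F))^2
            + 2 * q ^ (CARD('n) - 1) * real (card E) * real (card F) * real mm"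
  have two: "(2::'a) \<noteq> 0" by (rule two_ne_zero_field[OF q_odd])
  define B where "B = E \<times> F"
  define \<kappa> where "\<kappa> b = (pair_equiv :: (('a ^ 'n) \<times> ('a ^ 'n) set) rel) `` {(fst b, hyp (fst (snd b)) (snd (snd b)))}"
    for b :: "('a^'n) \<times> ('a^'n) \<times> 'a"
  have DeltaK: "Delta E F = \<kappa> ` B"
    unfolding Delta_def quotient_def \<kappa>_def B_def
    apply auto
    subgoal for xa v t by (rule image_eqI[where x="(xa, v, t)"]) auto
    subgoal by blast
    done
  have key: "(sB b)^2 = (sB b')^2" if b: "b \<in> B" and b': "b' \<in> B" and eq: "\<kappa> b = \<kappa> b'" for b b'
  proof -
    obtain x v t where bb: "b = (x, v, t)" by (cases b) auto
    obtain x' v' t' where bb': "b' = (x', v', t')" by (cases b') auto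
    have vW: "v \<in> W" "v' \<in> W" using b b' bb bb' F_sub by (auto simp: B_def)
    have "(x', hyp v' t') \<in> \<kappa> b'" unfolding \<kappa>_def bb' using pair_equiv_refl by simp
    hence "(x', hyp v' t') \<in> \<kappa> b" using eq by simp
    hence "((x, hyp v t), (x', hyp v' t')) \<in> (pair_equiv :: (('a ^ 'n) \<times> ('a ^ 'n) set) rel)"
      unfolding \<kappa>_def bb by simp
    then obtain M where M: "M \<in> (orth_group :: ('a^'n^'n) set)"
      and img: "(\<lambda>y. M *v (y - x) + x') ` hyp v t = hyp v' t'"
      unfolding pair_equiv_def by blast
    have "(t - fdot x v)^2 = (t' - fdot x' v')^2"
      by (rule invariant[OF two M img _ _ gamma_ns]) (use vW W_sub in auto)
    thus ?thesis by (simp add: sB_def bb bb')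
  qed
  have fB: "finite B" by simp
  have cardB: "real (card B) = X" by (simp add: B_def X_def card_cartesian_product)
  have "X^2 \<le> real (card (Delta E F)) * (\<Sum>b\<in>B. \<Sum>b'\<in>B. ind (\<kappa> b = \<kappa> b'))"
    using fiber_cs[OF fB, of \<kappa>] unfolding DeltaK cardB .
  also have "\<dots> \<le> real (card (Delta E F)) * (\<Sum>b\<in>B. \<Sum>b'\<in>B. ind ((sB b)^2 = (sB b')^2))"
  proof (rule mult_left_mono[OF sum_mono[OF sum_mono]])
    fix b b' assume "b \<in> B" "b' \<in> B"
    thus "ind (\<kappa> b = \<kappa> b') \<le> ind ((sB b)^2 = (sB b')^2)" using key[of b b'] by (auto simp: ind_def)
  qed simp
  also have "\<dots> \<le> real (card (Delta E F)) * (2 * (\<Sum>s\<in>UNIV. (nu E F s)^2))"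
    unfolding B_def by (intro mult_left_mono Qbound) simp
  also have "\<dots> \<le> real (card (Delta E F)) * Den"
  proof (rule mult_left_mono)
    have m: "real (card {t. (v, t) \<in> F}) \<le> real mm" if "v \<in> W" for v
      unfolding mm_def using that by (simp add: Max_ge)
    have "(\<Sum>s\<in>UNIV. (nu E F s)^2) \<le> real (card E)^2 * real (card F)^2 / real CARD('a)
           + real CARD('a) ^ (CARD('n) - 1) * real (card E) * real (card F) * real mm"
      by (rule nu_sq_bound[where W=W and \<gamma>=\<gamma>]) (use W_sub W_pairs gamma_ns F_sub m in auto)
    thus "2 * (\<Sum>s\<in>UNIV. (nu E F s)^2) \<le> Den"
      unfolding Den_def q_def by (simp add: algebra_simps)
  qed simp
  finally have main: "X^2 \<le> real (card (Delta E F)) * Den" .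
  have Den0: "Den \<ge> 0" unfolding Den_def using q0 by simp
  have part1: "X^2 / Den \<le> real (card (Delta E F))"
  proof (cases "Den = 0")
    case True thus ?thesis by simp
  next
    case False
    hence "Den > 0" using Den0 by simp
    thus ?thesis using main by (simp add: pos_divide_le_eq)
  qed
  have part2: "real (card (Delta E F)) > q / 4" if big: "X > q ^ (CARD('n) + 1)"
  proof -
    have X0: "X > 0" using big q0 by (meson less_trans zero_less_power)
    hence "card F > 0" unfolding X_def by (metis mult_zero_right of_nat_0 less_irrefl gr0I)
    hence "F \<noteq> {}" by auto
    hence Wne: "W \<noteq> {}" using F_sub by auto
    have "mm \<le> CARD('a)" unfolding mm_def
      using Wne by (simp add: Max_le_iff card_mono)
    hence mmq: "real mm \<le> q" by (simp add: q_def)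
    have qd: "q ^ (CARD('n) - 1) * q = q ^ CARD('n)" using d_ge
      by (metis Suc_diff_1 less_le_trans pos2 power_Suc2)
    have DenX: "Den = 2 / q * X^2 + 2 * q ^ (CARD('n) - 1) * X * real mm"
      unfolding Den_def X_def by (simp add: power2_eq_square mult_ac)
    have DenP: "Den > 0"
    proof -
      have "2 / q * X^2 > 0" using q0 X0 by simp
      moreover have "2 * q ^ (CARD('n) - 1) * X * real mm \<ge> 0" using q0 X0 by simp
      ultimately show ?thesis unfolding DenX by linarith
    qed
    have "Den = 2 / q * X^2 + 2 * q ^ (CARD('n) - 1) * X * real mm" by (rule DenX)
    also have "\<dots> \<le> 2 / q * X^2 + 2 * q ^ (CARD('n) - 1) * X * q"
      using mmq X0 q0 by (intro add_left_mono mult_left_mono) auto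
    also have "\<dots> = 2 / q * X^2 + 2 * q ^ CARD('n) * X"
      using qd by (simp add: mult_ac)
    also have "\<dots> < 4 * X^2 / q"
    proof -
      have "q ^ CARD('n) * q < X" using big by (simp add: mult.commute)
      hence "q ^ CARD('n) * q * X < X * X" using X0 by simp
      hence "q ^ CARD('n) * X < X^2 / q" using q0 by (simp add: field_simps power2_eq_square)
      thus ?thesis by (simp add: field_simps)
    qed
    finally have DenL: "Den < 4 * X^2 / q" .
    have "q / 4 = X^2 / (4 * X^2 / q)" using X0 q0 by (simp add: field_simps power2_eq_square)
    also have "\<dots> < X^2 / Den"
      using DenL DenP X0 q0 by (intro divide_strict_left_mono) auto
    also have "\<dots> \<le> real (card (Delta E F))" by (rule part1)
    finally show ?thesis .
  qed
  show ?thesis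
    using part1 part2 unfolding Den_def X_def q_def mm_def by (simp add: power_mult_distrib)
qed

end
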